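(* Let $\mathcal{Y}$ be sampled from $\operatorname{TBM}(\rho,\mathcal{S},z_1,\dots,z_d)$, fix a mode $k$, let $Y=\mathrm{mat}_k\mathcal{Y}$ and $X=\mathbb{E}Y$. Then $$\min_{i,j\in[n_k]:\,z_k(i)\ne z_k(j)}\|(XX^\top)_{i:}-(XX^\top)_{j:}\|\ \ge\ \frac{\prod_{k'=1}^d\alpha_{k'}}{\sqrt{2\alpha_k}}\,\frac{\delta_k^2}{\sqrt{n_kr_k}}\,n_1\cdots n_d\,\rho^2,$$ where $\delta_k$ is the mode-$k$ cluster separation and $\alpha_{k'}$ the mode-$k'$ cluster balance coefficients.
   Context: Tensor block model: $\operatorname{TBM}(\rho,\mathcal{S},z_1,\dots,z_d)$ with dimensions $n_1,\dots,n_d$ and cluster counts $r_1,\dots,r_d$ is the law of a random tensor $\mathcal{Y}\in\mathbb{Z}^{n_1\times\cdots\times n_d}$ with independent entries and $\mathbb{E}\mathcal{Y}_{i_1\dots i_d}=\rho\,\mathcal{S}_{z_1(i_1)\dots z_d(i_d)}$, where $\rho\ge0$, $\mathcal{S}\in[-1,1]^{r_1\times\cdots\times r_d}$, $z_j\in[r_j]^{n_j}$. Matricization: $\mathrm{mat}_k(\mathcal{A})\in\mathbb{R}^{n_k\times(n_1\cdots n_d/n_k)}$ has rows indexed by $i_k$ and columns by the remaining indices in lexicographic order, with entries $\mathcal{A}_{i_1\dots i_d}$. Mode-$k$ cluster separation: $\delta_k=\min_{l\ne l'}\|(\mathrm{mat}_k\mathcal{S})_{l:}-(\mathrm{mat}_k\mathcal{S})_{l':}\|/\sqrt{r_1\cdots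 r_d/r_k}$. Mode-$j$ cluster balance coefficient: $\alpha_j=\min_{l\in[r_j]}|z_j^{-1}\{l\}|/(n_j/r_j)$. Norms are Euclidean. *)

theory Defs
  imports "HOL-Probability.Probability"
begin

text \<open>Conventions: modes are 0,...,d-1; indices of mode j are 0,...,n j - 1;
  clusters of mode j are 0,...,r j - 1.  A (multi-)index of a d-tensor is a function
  nat \<Rightarrow> nat in PiE {..<d} (\<lambda>j. {..<n j}).\<close>

definition tidx :: "nat \<Rightarrow> (nat \<Rightarrow> nat) \<Rightarrow> (nat \<Rightarrow> nat) set" where
  "tidx d n = PiE {..<d} (\<lambda>j. {..<n j})"

text \<open>Column indices of the mode-k matricization: the multi-indices over the remaining modes.
  The norms used below do not depend on the order of the columns.\<close>
definition colidx :: "nat \<Rightarrow> (nat \<Rightarrow> nat) \<Rightarrow> nat \<Rightarrow> (nat \<Rightarrow> nat) set" where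
  "colidx d n k = PiE ({..<d} - {k}) (\<lambda>j. {..<n j})"

text \<open>Entry (i, c) of mat_k A, where c is a column multi-index.\<close>
definition matk :: "nat \<Rightarrow> ((nat \<Rightarrow> nat) \<Rightarrow> real) \<Rightarrow> nat \<Rightarrow> (nat \<Rightarrow> nat) \<Rightarrow> real" where
  "matk k A i c = A (c(k := i))"

definition gramk :: "nat \<Rightarrow> (nat \<Rightarrow> nat) \<Rightarrow> nat \<Rightarrow> ((nat \<Rightarrow> nat) \<Rightarrow> real) \<Rightarrow> nat \<Rightarrow> nat \<Rightarrow> real" where
  "gramk d n k A i i' = (\<Sum>c\<in>colidx d n k. matk k A i c * matk k A i' c)"

definition gram_row_dist :: "nat \<Rightarrow> (nat \<Rightarrow> nat) \<Rightarrow> nat \<Rightarrow> ((nat \<Rightarrow> nat) \<Rightarrow> real) \<Rightarrow> nat \<Rightarrow> nat \<Rightarrow> real" where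
  "gram_row_dist d n k A i j = sqrt (\<Sum>i'<n k. (gramk d n k A i i' - gramk d n k A j i')\<^sup>2)"

definition tbm_mean :: "nat \<Rightarrow> real \<Rightarrow> ((nat \<Rightarrow> nat) \<Rightarrow> real) \<Rightarrow> (nat \<Rightarrow> nat \<Rightarrow> nat) \<Rightarrow> (nat \<Rightarrow> nat) \<Rightarrow> real" where
  "tbm_mean d \<rho> S z idx = \<rho> * S (\<lambda>j\<in>{..<d}. z j (idx j))"

definition tbm_params :: "nat \<Rightarrow> (nat \<Rightarrow> nat) \<Rightarrow> (nat \<Rightarrow> nat) \<Rightarrow> real \<Rightarrow> ((nat \<Rightarrow> nat) \<Rightarrow> real)
    \<Rightarrow> (nat \<Rightarrow> nat \<Rightarrow> nat) \<Rightarrow> bool" where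
  "tbm_params d n r \<rho> S z \<longleftrightarrow> \<rho> \<ge> 0
     \<and> (\<forall>c\<in>tidx d r. \<bar>S c\<bar> \<le> 1)
     \<and> (\<forall>j<d. \<forall>i<n j. z j i < r j)"

definition is_TBM :: "'a measure \<Rightarrow> ('a \<Rightarrow> (nat \<Rightarrow> nat) \<Rightarrow> int) \<Rightarrow> nat \<Rightarrow> (nat \<Rightarrow> nat) \<Rightarrow> (nat \<Rightarrow> nat)
    \<Rightarrow> real \<Rightarrow> ((nat \<Rightarrow> nat) \<Rightarrow> real) \<Rightarrow> (nat \<Rightarrow> nat \<Rightarrow> nat) \<Rightarrow> bool" where
  "is_TBM M Y d n r \<rho> S z \<longleftrightarrow> prob_space M \<and> tbm_params d n r \<rho> S z
     \<and> prob_space.indep_vars M (\<lambda>_. count_space UNIV) (\<lambda>idx \<omega>. Y \<omega> idx) (tidx d n)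
     \<and> (\<forall>idx\<in>tidx d n. integrable M (\<lambda>\<omega>. real_of_int (Y \<omega> idx))
          \<and> prob_space.expectation M (\<lambda>\<omega>. real_of_int (Y \<omega> idx)) = tbm_mean d \<rho> S z idx)"

definition sep :: "nat \<Rightarrow> (nat \<Rightarrow> nat) \<Rightarrow> nat \<Rightarrow> ((nat \<Rightarrow> nat) \<Rightarrow> real) \<Rightarrow> real" where
  "sep d r k S = Min {sqrt (\<Sum>c\<in>colidx d r k. (matk k S l c - matk k S l' c)\<^sup>2)
                        / sqrt (real (\<Prod>j\<in>{..<d} - {k}. r j))
                      | l l'. l < r k \<and> l' < r k \<and> l \<noteq> l'}"

definition balance :: "(nat \<Rightarrow> nat) \<Rightarrow> (nat \<Rightarrow> nat) \<Rightarrow> (nat \<Rightarrow> nat \<Rightarrow> nat) \<Rightarrow> nat \<Rightarrow> real" where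
  "balance n r z j = real (Min {card {i. i < n j \<and> z j i = l} | l. l < r j}) / (real (n j) / real (r j))"

end

theory Submission
  imports Defs
begin

lemma sq_sum_half: "(x::real)^2 + y^2 \<ge> (x - y)^2 / 2"
proof -
  have "0 \<le> (x + y)^2" by simp
  thus ?thesis by (simp add: power2_eq_square algebra_simps)
qed

theorem lemma6p2:
  fixes M :: "'a measure" and Y :: "'a \<Rightarrow> (nat \<Rightarrow> nat) \<Rightarrow> int"
    and d :: nat and n r :: "nat \<Rightarrow> nat" and \<rho> :: real
    and S :: "(nat \<Rightarrow> nat) \<Rightarrow> real" and z :: "nat \<Rightarrow> nat \<Rightarrow> nat" and k :: nat
  assumes "is_TBM M Y d n r \<rho> S z"
    and "\<forall>j<d. n j > 0 \<and> r j > 0"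
    and "k < d"
  defines "X \<equiv> (\<lambda>idx. prob_space.expectation M (\<lambda>\<omega>. real_of_int (Y \<omega> idx)))"
  shows "\<forall>i<n k. \<forall>j<n k. z k i \<noteq> z k j \<longrightarrow>
           gram_row_dist d n k X i j \<ge>
             (\<Prod>k'<d. balance n r z k') / sqrt (2 * balance n r z k)
             * (sep d r k S)\<^sup>2 / sqrt (real (n k) * real (r k))
             * real (\<Prod>j<d. n j) * \<rho>\<^sup>2"
proof (intro allI impI)
  fix i j assume i: "i < n k" and j: "j < n k" and zij: "z k i \<noteq> z k j"
  have tbm: "tbm_params d n r \<rho> S z"
    and EX: "\<And>idx. idx \<in> tidx d n \<Longrightarrow> X idx = tbm_mean d \<rho> S z idx"
    using assms(1) unfolding is_TBM_def X_def by auto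
  have rho: "\<rho> \<ge> 0" and zr: "\<And>j' i'. j' < d \<Longrightarrow> i' < n j' \<Longrightarrow> z j' i' < r j'"
    using tbm unfolding tbm_params_def by auto
  have npos: "\<And>j'. j' < d \<Longrightarrow> n j' > 0" and rpos: "\<And>j'. j' < d \<Longrightarrow> r j' > 0"
    using assms(2) by auto
  define A where "A = {..<d} - {k}"
  define Ck where "Ck = colidx d n k"
  define Cr where "Cr = colidx d r k"
  define pi where "pi c = restrict (\<lambda>j'. z j' (c j')) A" for c :: "nat \<Rightarrow> nat"
  define T where "T a \<beta> = matk k S a \<beta>" for a \<beta>
  define K where "K a a' = (\<Sum>c\<in>Ck. T a (pi c) * T a' (pi c))" for a a'
  define m where "m j' = Min {card {i'. i' < n j' \<and> z j' i' = l} | l. l < r j'}" for j'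
  have finA: "finite A" unfolding A_def by auto
  have finCk: "finite Ck" unfolding Ck_def colidx_def by (auto intro!: finite_PiE)
  have finCr: "finite Cr" unfolding Cr_def colidx_def by (auto intro!: finite_PiE)
  have kA: "k \<notin> A" unfolding A_def by auto
  have pi_in: "pi c \<in> Cr" if "c \<in> Ck" for c
    using that zr unfolding pi_def Cr_def Ck_def colidx_def A_def by (auto simp: PiE_iff)
  have matX: "matk k X i1 c = \<rho> * T (z k i1) (pi c)" if "i1 < n k" "c \<in> Ck" for i1 c
  proof -
    have idx: "c(k := i1) \<in> tidx d n"
      using that assms(3) unfolding tidx_def Ck_def colidx_def by (auto simp: PiE_iff extensional_def)
    have eq: "(\<lambda>j'\<in>{..<d}. z j' ((c(k := i1)) j')) = (pi c)(k := z k i1)"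
      using assms(3) unfolding pi_def A_def by (auto simp: fun_eq_iff)
    show ?thesis unfolding matk_def EX[OF idx] T_def tbm_mean_def eq by simp
  qed
  have gram: "gramk d n k X i1 i2 = \<rho>^2 * K (z k i1) (z k i2)" if "i1 < n k" "i2 < n k" for i1 i2
    unfolding gramk_def K_def Ck_def[symmetric] using that
    by (simp add: matX sum_distrib_left power2_eq_square mult_ac)
  have fiber: "(\<Sum>c\<in>Ck. g (pi c)) = (\<Sum>\<beta>\<in>Cr. real (card {c. c \<in> Ck \<and> pi c = \<beta>}) * g \<beta>)" for g :: "(nat \<Rightarrow> nat) \<Rightarrow> real"
  proof -
    have "pi ` Ck \<subseteq> Cr" using pi_in by auto
    then show ?thesis using sum.group[OF finCk finCr, of pi "\<lambda>c. g (pi c)"] by simp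
  qed
  have fibeq: "{c. c \<in> Ck \<and> pi c = \<beta>} = PiE A (\<lambda>j'. {i'. i' < n j' \<and> z j' i' = \<beta> j'})"
    if "\<beta> \<in> Cr" for \<beta>
  proof -
    have bext: "\<beta> \<in> extensional A" using that unfolding Cr_def colidx_def A_def by (auto simp: PiE_def)
    show ?thesis
    proof (rule set_eqI, rule iffI)
      fix c assume "c \<in> {c. c \<in> Ck \<and> pi c = \<beta>}"
      then have "c \<in> Ck" "pi c = \<beta>" by auto
      then show "c \<in> PiE A (\<lambda>j'. {i'. i' < n j' \<and> z j' i' = \<beta> j'})"
        unfolding Ck_def colidx_def A_def pi_def by (auto simp: PiE_iff split: if_splits)
    next
      fix c assume c: "c \<in> PiE A (\<lambda>j'. {i'. i' < n j' \<and> z j' i' = \<beta> j'})"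
      then have "c \<in> Ck" unfolding Ck_def colidx_def A_def by (auto simp: PiE_iff)
      moreover have "pi c = \<beta>"
      proof
        fix x show "pi c x = \<beta> x"
          using c bext unfolding pi_def by (cases "x \<in> A") (auto simp: PiE_iff extensional_def)
      qed
      ultimately show "c \<in> {c. c \<in> Ck \<and> pi c = \<beta>}" by auto
    qed
  qed
  have mle: "m j' \<le> card {i'. i' < n j' \<and> z j' i' = l}" if "l < r j'" for j' l
    unfolding m_def by (rule Min_le) (use that in auto)
  define P where "P = (\<Prod>j'\<in>A. m j')"
  have fibcard: "real (card {c. c \<in> Ck \<and> pi c = \<beta>}) \<ge> real P" if "\<beta> \<in> Cr" for \<beta>
  proof -
    have "card {c. c \<in> Ck \<and> pi c = \<beta>} = (\<Prod>j'\<in>A. card {i'. i' < n j' \<and> z j' i' = \<beta> j'})"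
      unfolding fibeq[OF that] by (rule card_PiE[OF finA])
    also have "\<dots> \<ge> P" unfolding P_def
    proof (rule prod_mono)
      fix j' assume "j' \<in> A"
      then have "\<beta> j' < r j'" using that unfolding Cr_def colidx_def A_def by (auto simp: PiE_iff)
      then show "0 \<le> m j' \<and> m j' \<le> card {i'. i' < n j' \<and> z j' i' = \<beta> j'}" using mle by auto
    qed
    finally show ?thesis by simp
  qed
  define a where "a = z k i"
  define b where "b = z k j"
  have ab: "a < r k" "b < r k" "a \<noteq> b"
    using zr[OF assms(3) i] zr[OF assms(3) j] zij unfolding a_def b_def by auto
  have Ksym: "K x y = K y x" for x y unfolding K_def by (simp add: mult.commute)
  define Ia where "Ia = {i'. i' < n k \<and> z k i' = a}"
  define Ib where "Ib = {i'. i' < n k \<and> z k i' = b}"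
  have cardIa: "real (card Ia) \<ge> real (m k)" using mle[OF ab(1)] unfolding Ia_def by simp
  have cardIb: "real (card Ib) \<ge> real (m k)" using mle[OF ab(2)] unfolding Ib_def by simp
  define x where "x = K a a - K b a"
  define y where "y = K a b - K b b"
  define Q where "Q = (\<Sum>i'<n k. (gramk d n k X i i' - gramk d n k X j i')\<^sup>2)"
  define D where "D = (\<Sum>c\<in>Ck. (T a (pi c) - T b (pi c))\<^sup>2)"
  have Q1: "Q = (\<Sum>i'<n k. \<rho>^4 * (K a (z k i') - K b (z k i'))\<^sup>2)"
    unfolding Q_def
  proof (rule sum.cong)
    fix i' assume "i' \<in> {..<n k}"
    then show "(gramk d n k X i i' - gramk d n k X j i')\<^sup>2 = \<rho>^4 * (K a (z k i') - K b (z k i'))\<^sup>2"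
      using i j by (simp add: gram a_def b_def power2_eq_square algebra_simps power4_eq_xxxx)
  qed simp
  have Q2: "Q \<ge> (\<Sum>i'\<in>Ia \<union> Ib. \<rho>^4 * (K a (z k i') - K b (z k i'))\<^sup>2)"
    unfolding Q1 by (rule sum_mono2) (auto simp: Ia_def Ib_def)
  have disj: "Ia \<inter> Ib = {}" using ab unfolding Ia_def Ib_def by auto
  have "(\<Sum>i'\<in>Ia \<union> Ib. \<rho>^4 * (K a (z k i') - K b (z k i'))\<^sup>2)
      = (\<Sum>i'\<in>Ia. \<rho>^4 * x\<^sup>2) + (\<Sum>i'\<in>Ib. \<rho>^4 * y\<^sup>2)"
    using ab(3) by (subst sum.union_disjoint) (auto simp: disj Ia_def Ib_def x_def y_def Ksym)
  also have "\<dots> = real (card Ia) * (\<rho>^4 * x\<^sup>2) + real (card Ib) * (\<rho>^4 * y\<^sup>2)" by simp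
  also have "\<dots> \<ge> real (m k) * (\<rho>^4 * x\<^sup>2) + real (m k) * (\<rho>^4 * y\<^sup>2)"
    by (intro add_mono mult_right_mono cardIa cardIb) auto
  finally have Q3: "Q \<ge> real (m k) * \<rho>^4 * (x\<^sup>2 + y\<^sup>2)" using Q2 by (simp add: algebra_simps)
  have xy: "x - y = D"
  proof -
    have "D = (\<Sum>c\<in>Ck. T a (pi c) * T a (pi c) - 2 * (T a (pi c) * T b (pi c)) + T b (pi c) * T b (pi c))"
      unfolding D_def by (rule sum.cong) (simp_all add: power2_eq_square algebra_simps)
    also have "\<dots> = K a a - 2 * K a b + K b b"
      by (simp add: K_def sum.distrib sum_subtractf sum_distrib_left)
    finally show ?thesis unfolding x_def y_def using Ksym[of b a] by simp
  qed
  have Q4: "Q \<ge> real (m k) * \<rho>^4 * D\<^sup>2 / 2"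
  proof -
    have "x\<^sup>2 + y\<^sup>2 \<ge> D\<^sup>2 / 2" using sq_sum_half[of x y] xy by simp
    then have "real (m k) * \<rho>^4 * (x\<^sup>2 + y\<^sup>2) \<ge> real (m k) * \<rho>^4 * (D\<^sup>2 / 2)"
      by (intro mult_left_mono) auto
    then show ?thesis using Q3 by simp
  qed
  define E where "E = (\<Sum>\<beta>\<in>Cr. (T a \<beta> - T b \<beta>)\<^sup>2)"
  have DE: "D \<ge> real P * E"
  proof -
    have "D = (\<Sum>\<beta>\<in>Cr. real (card {c. c \<in> Ck \<and> pi c = \<beta>}) * (T a \<beta> - T b \<beta>)\<^sup>2)"
      unfolding D_def by (rule fiber)
    also have "\<dots> \<ge> (\<Sum>\<beta>\<in>Cr. real P * (T a \<beta> - T b \<beta>)\<^sup>2)"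
      by (intro sum_mono mult_right_mono fibcard) auto
    finally show ?thesis unfolding E_def by (simp add: sum_distrib_left)
  qed
  define R where "R = real (\<Prod>j'\<in>A. r j')"
  have Rpos: "R > 0" unfolding R_def using rpos by (auto simp: A_def intro!: prod_pos)
  define \<delta> where "\<delta> = sep d r k S"
  define f where "f l l' = sqrt (\<Sum>c\<in>colidx d r k. (matk k S l c - matk k S l' c)\<^sup>2)
                        / sqrt (real (\<Prod>j\<in>{..<d} - {k}. r j))" for l l'
  define FS where "FS = {f l l' | l l'. l < r k \<and> l' < r k \<and> l \<noteq> l'}"
  have \<delta>FS: "\<delta> = Min FS" unfolding \<delta>_def sep_def FS_def f_def by simp
  have finFS: "finite FS"
  proof (rule finite_subset)
    show "FS \<subseteq> (\<lambda>(l, l'). f l l') ` ({..<r k} \<times> {..<r k})" unfolding FS_def by auto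
  qed auto
  have abFS: "f a b \<in> FS" unfolding FS_def using ab by blast
  have \<delta>le: "\<delta> \<le> f a b" unfolding \<delta>FS using finFS abFS by (rule Min_le)
  have \<delta>ge: "\<delta> \<ge> 0"
  proof -
    have "Min FS \<in> FS" using finFS abFS by (intro Min_in) auto
    then show ?thesis unfolding \<delta>FS FS_def f_def by (auto intro!: divide_nonneg_nonneg sum_nonneg prod_nonneg)
  qed
  have fab: "f a b = sqrt E / sqrt R" unfolding f_def E_def R_def T_def Cr_def A_def by simp
  have E0: "E \<ge> 0" unfolding E_def by (intro sum_nonneg) auto
  have ER: "E \<ge> \<delta>\<^sup>2 * R"
  proof -
    have "\<delta>\<^sup>2 \<le> (sqrt E / sqrt R)\<^sup>2" using \<delta>le \<delta>ge fab by (intro power_mono) auto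
    also have "\<dots> = E / R" using E0 Rpos by (simp add: power_divide)
    finally show ?thesis using Rpos by (simp add: field_simps)
  qed
  have DPR: "D \<ge> real P * R * \<delta>\<^sup>2"
  proof -
    have "real P * E \<ge> real P * (\<delta>\<^sup>2 * R)" using ER by (intro mult_left_mono) auto
    then show ?thesis using DE by (simp add: algebra_simps)
  qed
  define al where "al j' = balance n r z j'" for j'
  have al: "al j' = real (m j') * real (r j') / real (n j')" for j'
    unfolding al_def balance_def m_def by simp
  have kin: "k \<in> {..<d}" using assms(3) by simp
  have Aeq: "{..<d} - {k} = A" unfolding A_def by simp
  have pal: "(\<Prod>k'<d. al k') = al k * (\<Prod>j'\<in>A. al j')"
    using prod.remove[OF _ kin, of al] Aeq by simp
  have pn: "real (\<Prod>j'<d. n j') = real (n k) * (\<Prod>j'\<in>A. real (n j'))"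
    using prod.remove[OF _ kin, of "\<lambda>j'. real (n j')"] Aeq by simp
  have PR: "(\<Prod>j'\<in>A. al j') * (\<Prod>j'\<in>A. real (n j')) = real P * R"
  proof -
    have "(\<Prod>j'\<in>A. al j') * (\<Prod>j'\<in>A. real (n j')) = (\<Prod>j'\<in>A. al j' * real (n j'))"
      by (simp add: prod.distrib)
    also have "\<dots> = (\<Prod>j'\<in>A. real (m j') * real (r j'))"
    proof (rule prod.cong)
      fix j' assume "j' \<in> A"
      then have "n j' > 0" using npos unfolding A_def by auto
      then show "al j' * real (n j') = real (m j') * real (r j')" by (simp add: al)
    qed simp
    also have "\<dots> = real P * R" unfolding P_def R_def by (simp add: prod.distrib)
    finally show ?thesis .
  qed
  define W where "W = real P * R * \<delta>\<^sup>2"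
  have W0: "W \<ge> 0" unfolding W_def using Rpos by auto
  define RHS where "RHS = (\<Prod>k'<d. balance n r z k') / sqrt (2 * balance n r z k)
             * (sep d r k S)\<^sup>2 / sqrt (real (n k) * real (r k))
             * real (\<Prod>j<d. n j) * \<rho>\<^sup>2"
  have RHS1: "RHS = al k * real (n k) * W * \<rho>\<^sup>2 / (sqrt (2 * al k) * sqrt (real (n k) * real (r k)))"
  proof -
    have "RHS = (al k * (\<Prod>j'\<in>A. al j')) * (real (n k) * (\<Prod>j'\<in>A. real (n j'))) * \<delta>\<^sup>2 * \<rho>\<^sup>2
         / (sqrt (2 * al k) * sqrt (real (n k) * real (r k)))"
      unfolding RHS_def pal[unfolded al_def, symmetric] pn[symmetric] \<delta>_def al_def by simp
    also have "\<dots> = al k * real (n k) * ((\<Prod>j'\<in>A. al j') * (\<Prod>j'\<in>A. real (n j'))) * \<delta>\<^sup>2 * \<rho>\<^sup>2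
         / (sqrt (2 * al k) * sqrt (real (n k) * real (r k)))" by (simp add: mult_ac)
    finally show ?thesis unfolding PR W_def by (simp add: mult_ac)
  qed
  have nk: "n k > 0" "r k > 0" using npos rpos assms(3) by auto
  have alk0: "al k \<ge> 0" unfolding al by simp
  have RHS2: "RHS\<^sup>2 \<le> real (m k) * \<rho>^4 * D\<^sup>2 / 2"
  proof (cases "al k = 0")
    case True
    then have "RHS = 0" unfolding RHS1 by simp
    then show ?thesis by simp
  next
    case False
    then have alp: "al k > 0" using alk0 by simp
    have "RHS\<^sup>2 = (al k * real (n k) * W * \<rho>\<^sup>2)\<^sup>2 / (2 * al k * (real (n k) * real (r k)))"
      unfolding RHS1 using alp nk
      by (simp add: power_divide power_mult_distrib real_sqrt_mult[symmetric])
    also have "\<dots> = al k * real (n k) / real (r k) * W\<^sup>2 * \<rho>^4 / 2"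
      using alp nk by (simp add: field_simps power2_eq_square power4_eq_xxxx)
    also have "al k * real (n k) / real (r k) = real (m k)" using nk by (simp add: al)
    finally have "RHS\<^sup>2 = real (m k) * \<rho>^4 * W\<^sup>2 / 2" by simp
    also have "\<dots> \<le> real (m k) * \<rho>^4 * D\<^sup>2 / 2"
      using DPR W0 unfolding W_def by (intro divide_right_mono mult_left_mono power_mono) auto
    finally show ?thesis .
  qed
  have "RHS \<le> sqrt (RHS\<^sup>2)" by simp
  also have "\<dots> \<le> sqrt Q" using RHS2 Q4 by (intro real_sqrt_le_mono) linarith
  finally have fin: "RHS \<le> sqrt Q" .
  show "gram_row_dist d n k X i j \<ge>
             (\<Prod>k'<d. balance n r z k') / sqrt (2 * balance n r z k)
             * (sep d r k S)\<^sup>2 / sqrt (real (n k) * real (r k))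
             * real (\<Prod>j<d. n j) * \<rho>\<^sup>2"
    using fin unfolding RHS_def gram_row_dist_def Q_def .
qed

end
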